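(* Let $\omega\in[n]^*$, $j\in[n]$, and $\sigma\in\mathrm{Sym}_n$ with $\sigma(j)=n$. Then \[B_\omega=\mathrm{Comp}_0\big(L^\circ(a^j_\omega;M_\omega,\sigma)\setminus L^\circ(0;M_\omega,\sigma)\big)\] and \[B_{\omega*j}=\mathrm{Comp}_0\big(L(a^j_\omega;M_\omega,\sigma)\setminus L^\circ(0;M_\omega,\sigma)\big).\]
   Context: Let $[n]=\{1,\dots,n\}$, $e_1,\dots,e_n$ the standard basis of $\mathbb{Z}^n$; $\varepsilon$ is the empty word, $*$ concatenation. For words $\omega$ over $[n]$ define recursively $a^i_\omega,\delta^i_\omega\in\mathbb{Z}^n$: $a^i_\varepsilon=\delta^i_\varepsilon=e_i$; $a^i_{\omega*j}=a^i_\omega$ if $i\ne j$, $a^j_{\omega*j}=a^j_\omega+\delta^j_\omega$; $\delta^j_{\omega*j}=\delta^j_\omega$, $\delta^i_{\omega*j}=\delta^i_\omega-\delta^j_\omega$ for $i\ne j$. Let $B_\varepsilon=\{0\}$, $B_{\omega*j}=B_\omega+\{0,\delta^j_\omega\}$ (Minkowski sum). Let $M_\omega=(\delta^1_\omega\ \cdots\ \delta^n_\omega)^{-1}$ (inverse of the matrix with columns $\delta^i_\omega$). $\mathrm{Sym}_n$ acts on $\mathbb{Z}^n$ by $\sigma\cdot x=(x_{\sigma^{-1}(i)})_{i\in[n]}$. Let $\le_{\mathrm{lex}}$ be the lexicographic order on $\mathbb{Z}^n$ (comparing first coordinates first), and write $x\le_{\sigma}y$ iff $\sigma x\le_{\mathrm{lex}}\sigma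 y$, and $x<_\sigma y$ iff $\sigma x<_{\mathrm{lex}}\sigma y$. For $P\in\mathbb{Z}^n$, $M\in\mathbb{Z}^{n\times n}_{\ge0}$ with $\det M=1$ and $\sigma\in\mathrm{Sym}_n$, let $L(P;M,\sigma)=\{x\in\mathbb{Z}^n: Mx\le_\sigma MP\}$ and $L^\circ(P;M,\sigma)=\{x\in\mathbb{Z}^n: Mx<_\sigma MP\}$. A subset of $\mathbb{Z}^n$ is regarded as a graph by joining two elements iff their Euclidean distance is $1$; $\mathrm{Comp}_0(X)$ is the connected component of $X$ containing $0$. *)

theory Defs
  imports Complex_Main "HOL-Combinatorics.Permutations"
begin

text \<open>Vectors of Z^n are represented as functions nat => int, indexed by [n] = {1..n},
  vanishing outside {1..n}. Words over [n] are lists of naturals in {1..n}.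
  Matrices are functions nat => nat => int (row, column), indexed by {1..n}.\<close>

definition Zn :: "nat \<Rightarrow> (nat \<Rightarrow> int) set" where
  "Zn n = {x. \<forall>i. i \<notin> {1..n} \<longrightarrow> x i = 0}"

definition unitvec :: "nat \<Rightarrow> nat \<Rightarrow> int" where
  "unitvec i = (\<lambda>k. if k = i then 1 else 0)"

definition ad_step ::
  "(nat \<Rightarrow> nat \<Rightarrow> int) \<times> (nat \<Rightarrow> nat \<Rightarrow> int) \<Rightarrow> nat
   \<Rightarrow> (nat \<Rightarrow> nat \<Rightarrow> int) \<times> (nat \<Rightarrow> nat \<Rightarrow> int)" where
  "ad_step st j = (let a = fst st; d = snd st in
     (\<lambda>i. if i = j then (\<lambda>k. a j k + d j k) else a i,
      \<lambda>i. if i = j then d j else (\<lambda>k. d i k - d j k)))"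

definition ad :: "nat list \<Rightarrow> (nat \<Rightarrow> nat \<Rightarrow> int) \<times> (nat \<Rightarrow> nat \<Rightarrow> int)" where
  "ad w = foldl ad_step (unitvec, unitvec) w"

definition avec :: "nat list \<Rightarrow> nat \<Rightarrow> nat \<Rightarrow> int" where
  "avec w = fst (ad w)"

definition delta :: "nat list \<Rightarrow> nat \<Rightarrow> nat \<Rightarrow> int" where
  "delta w = snd (ad w)"

definition zvec :: "nat \<Rightarrow> int" where "zvec = (\<lambda>k. 0)"

text \<open>B on the reversed word: Brev (rev w) = B_w.\<close>
primrec Brev :: "nat list \<Rightarrow> (nat \<Rightarrow> int) set" where
  "Brev [] = {zvec}"
| "Brev (j # r) = {(\<lambda>k. x k + y k) | x y. x \<in> Brev r \<and> y \<in> {zvec, delta (rev r) j}}"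

definition Bset :: "nat list \<Rightarrow> (nat \<Rightarrow> int) set" where
  "Bset w = Brev (rev w)"

definition inv_mat :: "nat \<Rightarrow> (nat \<Rightarrow> nat \<Rightarrow> int) \<Rightarrow> (nat \<Rightarrow> nat \<Rightarrow> int)" where
  "inv_mat n D = (THE M. (\<forall>i k. i \<notin> {1..n} \<or> k \<notin> {1..n} \<longrightarrow> M i k = 0) \<and>
      (\<forall>i\<in>{1..n}. \<forall>k\<in>{1..n}. (\<Sum>l=1..n. M i l * D l k) = (if i = k then 1 else 0)) \<and>
      (\<forall>i\<in>{1..n}. \<forall>k\<in>{1..n}. (\<Sum>l=1..n. D i l * M l k) = (if i = k then 1 else 0)))"

definition Mmat :: "nat \<Rightarrow> nat list \<Rightarrow> (nat \<Rightarrow> nat \<Rightarrow> int)" where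
  "Mmat n w = inv_mat n (\<lambda>r c. delta w c r)"

definition mv :: "nat \<Rightarrow> (nat \<Rightarrow> nat \<Rightarrow> int) \<Rightarrow> (nat \<Rightarrow> int) \<Rightarrow> (nat \<Rightarrow> int)" where
  "mv n M x = (\<lambda>i. if i \<in> {1..n} then (\<Sum>k=1..n. M i k * x k) else 0)"

definition act :: "(nat \<Rightarrow> nat) \<Rightarrow> (nat \<Rightarrow> int) \<Rightarrow> (nat \<Rightarrow> int)" where
  "act \<sigma> x = (\<lambda>i. x (inv \<sigma> i))"

definition lex_less :: "nat \<Rightarrow> (nat \<Rightarrow> int) \<Rightarrow> (nat \<Rightarrow> int) \<Rightarrow> bool" where
  "lex_less n x y = (\<exists>k\<in>{1..n}. (\<forall>i\<in>{1..<k}. x i = y i) \<and> x k < y k)"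

definition lex_le :: "nat \<Rightarrow> (nat \<Rightarrow> int) \<Rightarrow> (nat \<Rightarrow> int) \<Rightarrow> bool" where
  "lex_le n x y = (lex_less n x y \<or> (\<forall>i\<in>{1..n}. x i = y i))"

definition Lset :: "nat \<Rightarrow> (nat \<Rightarrow> int) \<Rightarrow> (nat \<Rightarrow> nat \<Rightarrow> int) \<Rightarrow> (nat \<Rightarrow> nat) \<Rightarrow> (nat \<Rightarrow> int) set" where
  "Lset n P M \<sigma> = {x \<in> Zn n. lex_le n (act \<sigma> (mv n M x)) (act \<sigma> (mv n M P))}"

definition Lopen :: "nat \<Rightarrow> (nat \<Rightarrow> int) \<Rightarrow> (nat \<Rightarrow> nat \<Rightarrow> int) \<Rightarrow> (nat \<Rightarrow> nat) \<Rightarrow> (nat \<Rightarrow> int) set" where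
  "Lopen n P M \<sigma> = {x \<in> Zn n. lex_less n (act \<sigma> (mv n M x)) (act \<sigma> (mv n M P))}"

definition adj :: "nat \<Rightarrow> (nat \<Rightarrow> int) \<Rightarrow> (nat \<Rightarrow> int) \<Rightarrow> bool" where
  "adj n x y = (sqrt (\<Sum>i=1..n. (real_of_int (x i - y i))\<^sup>2) = 1)"

text \<open>Connected component of X (as a unit-distance graph) containing 0; empty if 0 \<notin> X.\<close>
definition Comp0 :: "nat \<Rightarrow> (nat \<Rightarrow> int) set \<Rightarrow> (nat \<Rightarrow> int) set" where
  "Comp0 n X = {y. zvec \<in> X \<and> y \<in> X \<and> (\<lambda>u v. u \<in> X \<and> v \<in> X \<and> adj n u v)\<^sup>*\<^sup>* zvec y}"

end

theory Submission
  imports Defs "HOL-Library.Function_Algebras"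
begin

lemma zvec_0: "zvec = 0" by (simp add: zvec_def fun_eq_iff)
lemma lam0[simp]: "(\<lambda>a. 0::int) = 0" by (simp add: fun_eq_iff)

lemma ad_snoc: "ad (w @ [l]) = ad_step (ad w) l"
  by (simp add: ad_def)

lemma avec_snoc: "avec (w @ [l]) i = (if i = l then avec w l + delta w l else avec w i)"
  by (simp add: avec_def delta_def ad_snoc ad_step_def Let_def fun_eq_iff)

lemma delta_snoc: "delta (w @ [l]) i = (if i = l then delta w l else delta w i - delta w l)"
  by (simp add: avec_def delta_def ad_snoc ad_step_def Let_def fun_eq_iff)

lemma avec_nil: "avec [] i = unitvec i" by (simp add: avec_def ad_def)
lemma delta_nil: "delta [] i = unitvec i" by (simp add: delta_def ad_def)

lemma Bset_nil: "Bset [] = {0}" by (simp add: Bset_def zvec_0)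
lemma Bset_snoc: "Bset (w @ [l]) = {x + y | x y. x \<in> Bset w \<and> y \<in> {0, delta w l}}"
  by (simp add: Bset_def zvec_0 plus_fun_def)

lemma Bset_snoc_iff: "q \<in> Bset (w @ [l]) \<longleftrightarrow> (q \<in> Bset w \<or> (\<exists>x\<in>Bset w. q = x + delta w l))"
  apply (auto simp: Bset_snoc) by (metis add.right_neutral)

definition Pv :: "nat list \<Rightarrow> nat \<Rightarrow> int" where "Pv w = avec w 0 - delta w 0"

lemma avec_Pv_aux: "avec w i - delta w i = avec w i' - delta w i'"
proof (induction w arbitrary: i i' rule: rev_induct)
  case Nil then show ?case by (simp add: avec_nil delta_nil)
next
  case (snoc l w)
  have e: "avec w i x - delta w i x = avec w i' x - delta w i' x" for i i' x
    using snoc[of i i'] by (simp add: fun_eq_iff)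
  have "avec (w @ [l]) i x - delta (w @ [l]) i x = avec w l x" for i x
    using e[of i x l] by (simp add: avec_snoc delta_snoc)
  then show ?case by (simp add: fun_eq_iff)
qed

lemma avec_Pv: "avec w i = Pv w + delta w i"
  using avec_Pv_aux[of w i 0] unfolding Pv_def by (metis diff_add_cancel)

lemma Pv_snoc: "Pv (w @ [l]) = Pv w + delta w l"
proof -
  have "Pv (w @ [l]) = avec (w @ [l]) l - delta (w @ [l]) l" using avec_Pv[of "w @ [l]" l] by simp
  also have "\<dots> = avec w l" by (simp add: avec_snoc delta_snoc)
  also have "\<dots> = Pv w + delta w l" by (rule avec_Pv)
  finally show ?thesis .
qed

lemma Pv_nil: "Pv [] = 0" by (simp add: Pv_def avec_nil delta_nil)

lemma a_minus_e_in_B: "avec w l - unitvec l \<in> Bset w"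
proof (induction w arbitrary: l rule: rev_induct)
  case Nil then show ?case by (simp add: avec_nil Bset_nil)
next
  case (snoc m w)
  show ?case
  proof (cases "l = m")
    case True
    have "avec (w @ [m]) l - unitvec l = (avec w m - unitvec m) + delta w m"
      using True by (simp add: avec_snoc fun_eq_iff)
    then show ?thesis using snoc[of m] unfolding Bset_snoc_iff by blast
  next
    case False
    then show ?thesis using snoc[of l] by (simp add: Bset_snoc_iff avec_snoc)
  qed
qed

lemma Pv_in_B: "Pv w \<in> Bset w"
proof (induction w rule: rev_induct)
  case Nil then show ?case by (simp add: Pv_nil Bset_nil)
next
  case (snoc m w) then show ?case unfolding Bset_snoc_iff Pv_snoc
    by (intro disjI2 bexI[of _ "Pv w"]) simp_all
qed

lemma zero_in_B: "0 \<in> Bset w"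
proof (induction w rule: rev_induct)
  case Nil then show ?case by (simp add: Bset_nil)
next
  case (snoc m w) then show ?case by (auto simp: Bset_snoc_iff)
qed

lemma Zn_add: "x \<in> Zn n \<Longrightarrow> y \<in> Zn n \<Longrightarrow> x + y \<in> Zn n" by (simp add: Zn_def)
lemma Zn_diff: "x \<in> Zn n \<Longrightarrow> y \<in> Zn n \<Longrightarrow> x - y \<in> Zn n" by (simp add: Zn_def)
lemma Zn_0: "0 \<in> Zn n" by (simp add: Zn_def)
lemma Zn_unit: "k \<in> {1..n} \<Longrightarrow> unitvec k \<in> Zn n" by (auto simp: Zn_def unitvec_def)

lemma delta_Zn: "set w \<subseteq> {1..n} \<Longrightarrow> k \<in> {1..n} \<Longrightarrow> delta w k \<in> Zn n"
proof (induction w arbitrary: k rule: rev_induct)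
  case Nil then show ?case by (simp add: delta_nil Zn_unit)
next
  case (snoc m w) then show ?case by (auto simp: delta_snoc intro!: Zn_diff)
qed

lemma B_Zn: "set w \<subseteq> {1..n} \<Longrightarrow> Bset w \<subseteq> Zn n"
proof (induction w rule: rev_induct)
  case Nil then show ?case by (simp add: Bset_nil Zn_0)
next
  case (snoc m w)
  then have h1: "Bset w \<subseteq> Zn n" and h2: "delta w m \<in> Zn n"
    by (auto intro!: delta_Zn)
  show ?case
  proof
    fix q assume "q \<in> Bset (w @ [m])"
    then consider "q \<in> Bset w" | x where "x \<in> Bset w" "q = x + delta w m"
      unfolding Bset_snoc_iff by blast
    then show "q \<in> Zn n"
    proof cases
      case 1 then show ?thesis using h1 by (rule subsetD[rotated])
    next
      case 2 then show ?thesis using h1 h2 by (simp add: Zn_add subsetD)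
    qed
  qed
qed

lemma Pv_Zn: "set w \<subseteq> {1..n} \<Longrightarrow> Pv w \<in> Zn n"
  using B_Zn Pv_in_B by (metis subsetD)


section \<open>Matrices\<close>

definition Rstep :: "nat \<Rightarrow> (nat \<Rightarrow> nat \<Rightarrow> int) \<Rightarrow> nat \<Rightarrow> (nat \<Rightarrow> nat \<Rightarrow> int)" where
  "Rstep n R l = (\<lambda>i k. if i = l then (\<Sum>m=1..n. R m k) else R i k)"

definition Rm :: "nat \<Rightarrow> nat list \<Rightarrow> nat \<Rightarrow> nat \<Rightarrow> int" where
  "Rm n w = foldl (Rstep n) (\<lambda>i k. if i = k then 1 else 0) w"

lemma Rm_snoc: "Rm n (w @ [l]) = Rstep n (Rm n w) l" by (simp add: Rm_def)
lemma Rm_nil: "Rm n [] = (\<lambda>i k. if i = k then 1 else 0)" by (simp add: Rm_def)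

definition Cw :: "nat \<Rightarrow> nat list \<Rightarrow> (nat \<Rightarrow> int) \<Rightarrow> (nat \<Rightarrow> int)" where
  "Cw n w x = mv n (Rm n w) x"

definition Einv :: "nat \<Rightarrow> nat \<Rightarrow> (nat \<Rightarrow> int) \<Rightarrow> (nat \<Rightarrow> int)" where
  "Einv n l y = (\<lambda>i. if i = l then (\<Sum>m=1..n. y m) else y i)"

lemma mv_add: "mv n M (x + y) = mv n M x + mv n M y"
  by (simp add: mv_def fun_eq_iff distrib_left sum.distrib)
lemma mv_diff: "mv n M (x - y) = mv n M x - mv n M y"
  by (simp add: mv_def fun_eq_iff right_diff_distrib sum_subtractf)
lemma mv_zero: "mv n M 0 = 0"
  by (simp add: mv_def fun_eq_iff)

lemma Cw_add: "Cw n w (x + y) = Cw n w x + Cw n w y" by (simp add: Cw_def mv_add)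
lemma Cw_diff: "Cw n w (x - y) = Cw n w x - Cw n w y" by (simp add: Cw_def mv_diff)
lemma Cw_zero: "Cw n w 0 = 0" by (simp add: Cw_def mv_zero)
lemma Cw_out: "i \<notin> {1..n} \<Longrightarrow> Cw n w x i = 0" by (auto simp: Cw_def mv_def)

lemma sum_ind1: "finite A \<Longrightarrow> i \<in> A \<Longrightarrow> (\<Sum>k\<in>A. (if i = k then 1 else 0) * f k) = (f i :: int)"
proof -
  assume "finite A" "i \<in> A"
  have "(\<Sum>k\<in>A. (if i = k then 1 else 0) * f k) = (\<Sum>k\<in>A. if i = k then f k else 0)"
    by (rule sum.cong) auto
  also have "\<dots> = f i" using \<open>finite A\<close> \<open>i \<in> A\<close> by (simp add: sum.delta)
  finally show ?thesis .
qed

lemma sum_ind2: "finite A \<Longrightarrow> i \<in> A \<Longrightarrow> (\<Sum>k\<in>A. f k * (if k = i then 1 else 0)) = (f i :: int)"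
proof -
  assume "finite A" "i \<in> A"
  have "(\<Sum>k\<in>A. f k * (if k = i then 1 else 0)) = (\<Sum>k\<in>A. if i = k then f k else 0)"
    by (rule sum.cong) auto
  also have "\<dots> = f i" using \<open>finite A\<close> \<open>i \<in> A\<close> by (simp add: sum.delta)
  finally show ?thesis .
qed

lemma Einv_add: "Einv n l (x + y) = Einv n l x + Einv n l y"
  by (simp add: Einv_def fun_eq_iff sum.distrib)
lemma Einv_diff: "Einv n l (x - y) = Einv n l x - Einv n l y"
  by (simp add: Einv_def fun_eq_iff sum_subtractf)

lemma C_snoc:
  assumes l: "l \<in> {1..n}"
  shows "Cw n (w @ [l]) x = Einv n l (Cw n w x)"
proof (rule ext)
  fix i
  show "Cw n (w @ [l]) x i = Einv n l (Cw n w x) i"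
  proof (cases "i \<in> {1..n}")
    case False
    then have "i \<noteq> l" using l by auto
    then show ?thesis using False by (auto simp: Cw_def mv_def Einv_def)
  next
    case True
    show ?thesis
    proof (cases "i = l")
      case False
      then show ?thesis using True by (simp add: Cw_def mv_def Einv_def Rm_snoc Rstep_def)
    next
      case il: True
      have "Cw n (w @ [l]) x i = (\<Sum>k=1..n. (\<Sum>m=1..n. Rm n w m k) * x k)"
        using True il by (simp add: Cw_def mv_def Rm_snoc Rstep_def)
      also have "\<dots> = (\<Sum>k=1..n. \<Sum>m=1..n. Rm n w m k * x k)"
        by (simp add: sum_distrib_right)
      also have "\<dots> = (\<Sum>m=1..n. \<Sum>k=1..n. Rm n w m k * x k)"
        by (rule sum.swap)
      also have "\<dots> = (\<Sum>m=1..n. Cw n w x m)"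
        by (rule sum.cong) (simp_all add: Cw_def mv_def)
      also have "\<dots> = Einv n l (Cw n w x) i" using il by (simp add: Einv_def)
      finally show ?thesis .
    qed
  qed
qed

lemma sum_unitvec: "k \<in> {1..n} \<Longrightarrow> (\<Sum>m=1..n. unitvec k m) = 1"
  unfolding unitvec_def by (simp add: sum.delta')

lemma C_delta:
  assumes "set w \<subseteq> {1..n}" "k \<in> {1..n}"
  shows "Cw n w (delta w k) = unitvec k"
  using assms
proof (induction w arbitrary: k rule: rev_induct)
  case Nil
  show ?case
  proof (rule ext)
    fix i show "Cw n [] (delta [] k) i = unitvec k i"
      using Nil(2) sum_ind1[of "{1..n}" i "unitvec k"] by (auto simp: Cw_def mv_def Rm_nil delta_nil unitvec_def)
  qed
next
  case (snoc l w)
  have l: "l \<in> {1..n}" and w: "set w \<subseteq> {1..n}" using snoc.prems by auto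
  show ?case
  proof (cases "k = l")
    case True
    then have "Cw n (w @ [l]) (delta (w @ [l]) k) = Einv n l (unitvec l)"
      using snoc.IH[OF w l] by (simp add: C_snoc[OF l] delta_snoc)
    also have "\<dots> = unitvec k" using True sum_unitvec[OF l]
      by (auto simp: Einv_def fun_eq_iff unitvec_def)
    finally show ?thesis .
  next
    case False
    then have "Cw n (w @ [l]) (delta (w @ [l]) k) = Einv n l (unitvec k - unitvec l)"
      using snoc.IH[OF w l] snoc.IH[OF w snoc.prems(2)] by (simp add: C_snoc[OF l] delta_snoc Cw_diff Einv_diff)
    also have "\<dots> = unitvec k" using False sum_unitvec[OF l] sum_unitvec[OF snoc.prems(2)]
      by (auto simp: Einv_def fun_eq_iff unitvec_def sum_subtractf)
    finally show ?thesis .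
  qed
qed

lemma DR:
  assumes "set w \<subseteq> {1..n}" "i \<in> {1..n}" "k \<in> {1..n}"
  shows "(\<Sum>l=1..n. delta w l i * Rm n w l k) = (if i = k then 1 else 0)"
  using assms
proof (induction w rule: rev_induct)
  case Nil
  then show ?case using sum_ind2[of "{1..n}" k "\<lambda>l. unitvec l i"] by (simp add: delta_nil Rm_nil unitvec_def)
next
  case (snoc m w)
  have m: "m \<in> {1..n}" and w: "set w \<subseteq> {1..n}" using snoc.prems by auto
  let ?I = "{1..n}"
  let ?R = "Rm n w"
  have fin: "finite (?I - {m})" by simp
  have "(\<Sum>l\<in>?I. delta (w @ [m]) l i * Rm n (w @ [m]) l k)
      = delta (w @ [m]) m i * Rm n (w @ [m]) m k + (\<Sum>l\<in>?I - {m}. delta (w @ [m]) l i * Rm n (w @ [m]) l k)"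
    using m by (simp add: sum.remove)
  also have "\<dots> = delta w m i * (\<Sum>l\<in>?I. ?R l k) + (\<Sum>l\<in>?I - {m}. (delta w l i - delta w m i) * ?R l k)"
    by (simp add: delta_snoc Rm_snoc Rstep_def)
  also have "\<dots> = delta w m i * (?R m k + (\<Sum>l\<in>?I - {m}. ?R l k)) + ((\<Sum>l\<in>?I - {m}. delta w l i * ?R l k) - delta w m i * (\<Sum>l\<in>?I - {m}. ?R l k))"
    using m by (simp add: sum.remove left_diff_distrib sum_subtractf sum_distrib_left)
  also have "\<dots> = delta w m i * ?R m k + (\<Sum>l\<in>?I - {m}. delta w l i * ?R l k)"
    by (simp add: algebra_simps)
  also have "\<dots> = (\<Sum>l\<in>?I. delta w l i * ?R l k)"
    using m by (simp add: sum.remove)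
  also have "\<dots> = (if i = k then 1 else 0)" using snoc.IH w snoc.prems by simp
  finally show ?case .
qed

lemma RD:
  assumes "set w \<subseteq> {1..n}" "i \<in> {1..n}" "k \<in> {1..n}"
  shows "(\<Sum>l=1..n. Rm n w i l * delta w k l) = (if i = k then 1 else 0)"
proof -
  have "(\<Sum>l=1..n. Rm n w i l * delta w k l) = Cw n w (delta w k) i"
    using assms(2) by (simp add: Cw_def mv_def)
  also have "\<dots> = (if i = k then 1 else 0)" using C_delta[OF assms(1,3)] by (simp add: unitvec_def)
  finally show ?thesis .
qed


lemma Mmat_eq:
  assumes w: "set w \<subseteq> {1..n}"
  shows "Mmat n w = (\<lambda>i k. if i \<in> {1..n} \<and> k \<in> {1..n} then Rm n w i k else 0)"
    (is "_ = ?Rr")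
proof -
  have c2: "(\<Sum>l=1..n. ?Rr i l * delta w k l) = (if i = k then 1 else 0)"
    if "i \<in> {1..n}" "k \<in> {1..n}" for i k
  proof -
    have "(\<Sum>l=1..n. ?Rr i l * delta w k l) = (\<Sum>l=1..n. Rm n w i l * delta w k l)"
      by (rule sum.cong) (use that in auto)
    then show ?thesis using RD[OF w that] by simp
  qed
  have c3: "(\<Sum>l=1..n. delta w l i * ?Rr l k) = (if i = k then 1 else 0)"
    if "i \<in> {1..n}" "k \<in> {1..n}" for i k
  proof -
    have "(\<Sum>l=1..n. delta w l i * ?Rr l k) = (\<Sum>l=1..n. delta w l i * Rm n w l k)"
      by (rule sum.cong) (use that in auto)
    then show ?thesis using DR[OF w that] by simp
  qed
  show ?thesis
    unfolding Mmat_def inv_mat_def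
  proof (rule the_equality)
    show "(\<forall>i k. i \<notin> {1..n} \<or> k \<notin> {1..n} \<longrightarrow> ?Rr i k = 0) \<and>
      (\<forall>i\<in>{1..n}. \<forall>k\<in>{1..n}. (\<Sum>l = 1..n. ?Rr i l * delta w k l) = (if i = k then 1 else 0)) \<and>
      (\<forall>i\<in>{1..n}. \<forall>k\<in>{1..n}. (\<Sum>l = 1..n. delta w l i * ?Rr l k) = (if i = k then 1 else 0))"
      using c2 c3 by auto
  next
    fix M
    assume "(\<forall>i k. i \<notin> {1..n} \<or> k \<notin> {1..n} \<longrightarrow> M i k = 0) \<and>
      (\<forall>i\<in>{1..n}. \<forall>k\<in>{1..n}. (\<Sum>l = 1..n. M i l * delta w k l) = (if i = k then 1 else 0)) \<and>
      (\<forall>i\<in>{1..n}. \<forall>k\<in>{1..n}. (\<Sum>l = 1..n. delta w l i * M l k) = (if i = k then 1 else 0))"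
    then have m1: "\<And>i k. i \<notin> {1..n} \<or> k \<notin> {1..n} \<Longrightarrow> M i k = 0"
      and m2: "\<And>i k. i \<in> {1..n} \<Longrightarrow> k \<in> {1..n} \<Longrightarrow> (\<Sum>l = 1..n. M i l * delta w k l) = (if i = k then 1 else 0)"
      by auto
    show "M = ?Rr"
    proof (intro ext)
      fix i k
      show "M i k = ?Rr i k"
      proof (cases "i \<in> {1..n} \<and> k \<in> {1..n}")
        case False then show ?thesis using m1 by auto
      next
        case True
        then have i: "i \<in> {1..n}" and k: "k \<in> {1..n}" by auto
        have "M i k = (\<Sum>l=1..n. M i l * (if l = k then 1 else 0))"
          using sum_ind2[of "{1..n}" k "M i"] k by simp
        also have "\<dots> = (\<Sum>l=1..n. M i l * (\<Sum>m=1..n. delta w m l * ?Rr m k))"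
          by (rule sum.cong) (use c3 k in auto)
        also have "\<dots> = (\<Sum>l=1..n. \<Sum>m=1..n. M i l * delta w m l * ?Rr m k)"
          by (simp add: sum_distrib_left mult.assoc)
        also have "\<dots> = (\<Sum>m=1..n. \<Sum>l=1..n. M i l * delta w m l * ?Rr m k)"
          by (rule sum.swap)
        also have "\<dots> = (\<Sum>m=1..n. (\<Sum>l=1..n. M i l * delta w m l) * ?Rr m k)"
          by (simp add: sum_distrib_right)
        also have "\<dots> = (\<Sum>m=1..n. (if i = m then 1 else 0) * ?Rr m k)"
          by (rule sum.cong) (use m2 i in auto)
        also have "\<dots> = ?Rr i k" using sum_ind1[of "{1..n}" i "\<lambda>m. ?Rr m k"] i by simp
        finally show ?thesis .
      qed
    qed
  qed
qed

lemma mv_Mmat: "set w \<subseteq> {1..n} \<Longrightarrow> mv n (Mmat n w) x = Cw n w x"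
  unfolding Mmat_eq Cw_def mv_def
  by (intro ext) (auto intro!: sum.cong)

lemma C_inv:
  assumes w: "set w \<subseteq> {1..n}" and x: "x \<in> Zn n" and i: "i \<in> {1..n}"
  shows "x i = (\<Sum>l=1..n. delta w l i * Cw n w x l)"
proof -
  have "(\<Sum>l=1..n. delta w l i * Cw n w x l) = (\<Sum>l=1..n. delta w l i * (\<Sum>k=1..n. Rm n w l k * x k))"
    by (rule sum.cong) (auto simp: Cw_def mv_def)
  also have "\<dots> = (\<Sum>l=1..n. \<Sum>k=1..n. delta w l i * Rm n w l k * x k)"
    by (simp add: sum_distrib_left mult.assoc)
  also have "\<dots> = (\<Sum>k=1..n. \<Sum>l=1..n. delta w l i * Rm n w l k * x k)"
    by (rule sum.swap)
  also have "\<dots> = (\<Sum>k=1..n. (\<Sum>l=1..n. delta w l i * Rm n w l k) * x k)"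
    by (simp add: sum_distrib_right)
  also have "\<dots> = (\<Sum>k=1..n. (if i = k then 1 else 0) * x k)"
    by (rule sum.cong) (use DR[OF w i] in auto)
  also have "\<dots> = x i" using sum_ind1[of "{1..n}" i x] i by simp
  finally show ?thesis by simp
qed

lemma C_inj:
  assumes w: "set w \<subseteq> {1..n}" and "x \<in> Zn n" "y \<in> Zn n" "Cw n w x = Cw n w y"
  shows "x = y"
proof (rule ext)
  fix i show "x i = y i"
  proof (cases "i \<in> {1..n}")
    case True then show ?thesis using C_inv[OF w assms(2) True] C_inv[OF w assms(3) True] assms(4) by simp
  next
    case False then show ?thesis using assms(2,3) by (simp add: Zn_def)
  qed
qed


section \<open>Sign conditions\<close>

definition nonneg :: "nat \<Rightarrow> (nat \<Rightarrow> int) \<Rightarrow> bool" where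
  "nonneg n y = (\<forall>i\<in>{1..n}. 0 \<le> y i)"
definition posv :: "nat \<Rightarrow> (nat \<Rightarrow> int) \<Rightarrow> bool" where
  "posv n y = (nonneg n y \<and> (\<exists>i\<in>{1..n}. 0 < y i))"
definition negv :: "nat \<Rightarrow> (nat \<Rightarrow> int) \<Rightarrow> bool" where
  "negv n y = ((\<forall>i\<in>{1..n}. y i \<le> 0) \<and> (\<exists>i\<in>{1..n}. y i < 0))"

lemma negv_posv: "negv n y \<longleftrightarrow> posv n (- y)"
  by (auto simp: negv_def posv_def nonneg_def)

lemma Einv_uminus: "Einv n l (- y) = - Einv n l y"
  by (simp add: Einv_def fun_eq_iff sum_negf)

lemma nonneg_add: "nonneg n x \<Longrightarrow> nonneg n y \<Longrightarrow> nonneg n (x + y)"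
  by (simp add: nonneg_def)
lemma nonneg_unit: "nonneg n (unitvec k)" by (simp add: nonneg_def unitvec_def)
lemma nonneg_zero: "nonneg n 0" by (simp add: nonneg_def)

lemma nonneg_Einv: "nonneg n y \<Longrightarrow> nonneg n (Einv n l y)"
  by (auto simp: nonneg_def Einv_def intro!: sum_nonneg)

lemma posv_sum: assumes "posv n u" shows "1 \<le> (\<Sum>m=1..n. u m)"
proof -
  from assms obtain i where i: "i \<in> {1..n}" "0 < u i" and nn: "\<forall>m\<in>{1..n}. 0 \<le> u m"
    by (auto simp: posv_def nonneg_def)
  have "u i \<le> (\<Sum>m=1..n. u m)" by (rule member_le_sum) (use i nn in auto)
  then show ?thesis using i by simp
qed

lemma posv_Einv: assumes "l \<in> {1..n}" "posv n u" shows "posv n (Einv n l u)"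
proof -
  have "nonneg n (Einv n l u)" using assms by (simp add: posv_def nonneg_Einv)
  moreover have "0 < Einv n l u l" using posv_sum[OF assms(2)] by (simp add: Einv_def)
  ultimately show ?thesis using assms(1) by (auto simp: posv_def)
qed

lemma posv_Einv1:
  assumes l: "l \<in> {1..n}" and u: "posv n u"
  shows "(\<forall>i\<in>{1..n}. u i = unitvec l i) \<or> posv n (Einv n l (u - unitvec l))"
proof -
  have nn: "\<forall>m\<in>{1..n}. 0 \<le> u m" using u by (simp add: posv_def nonneg_def)
  have s1: "(\<Sum>m=1..n. (u - unitvec l) m) = (\<Sum>m=1..n. u m) - 1"
    using sum_unitvec[OF l] by (simp add: sum_subtractf)
  have nE: "nonneg n (Einv n l (u - unitvec l))"
    unfolding nonneg_def
  proof
    fix i assume i: "i \<in> {1..n}"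
    show "0 \<le> Einv n l (u - unitvec l) i"
    proof (cases "i = l")
      case True then show ?thesis using s1 posv_sum[OF u] by (simp add: Einv_def)
    next
      case False then show ?thesis using nn i by (simp add: Einv_def unitvec_def)
    qed
  qed
  show ?thesis
  proof (cases "\<exists>i\<in>{1..n} - {l}. 0 < u i")
    case True
    then obtain i where "i \<in> {1..n}" "i \<noteq> l" "0 < u i" by blast
    then have "0 < Einv n l (u - unitvec l) i" by (simp add: Einv_def unitvec_def)
    then show ?thesis using nE \<open>i \<in> {1..n}\<close> by (auto simp: posv_def)
  next
    case False
    have z: "\<forall>i\<in>{1..n} - {l}. u i = 0"
    proof
      fix i assume i: "i \<in> {1..n} - {l}"
      then have "0 \<le> u i" "\<not> 0 < u i" using nn False by auto
      then show "u i = 0" by simp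
    qed
    have su: "(\<Sum>m=1..n. u m) = u l"
    proof -
      have "(\<Sum>m=1..n. u m) = u l + (\<Sum>m\<in>{1..n} - {l}. u m)" using l by (simp add: sum.remove)
      also have "(\<Sum>m\<in>{1..n} - {l}. u m) = 0" using z by simp
      finally show ?thesis by simp
    qed
    from u obtain i where "i \<in> {1..n}" "0 < u i" by (auto simp: posv_def)
    have "i = l"
    proof (rule ccontr)
      assume "i \<noteq> l"
      then have "u i = 0" using z \<open>i \<in> {1..n}\<close> by simp
      with \<open>0 < u i\<close> show False by simp
    qed
    then have ul: "0 < u l" using \<open>0 < u i\<close> by simp
    show ?thesis
    proof (cases "u l = 1")
      case True
      then have "\<forall>i\<in>{1..n}. u i = unitvec l i" using z by (auto simp: unitvec_def)
      then show ?thesis by simp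
    next
      case False
      then have "0 < Einv n l (u - unitvec l) l" using s1 su ul by (simp add: Einv_def)
      then show ?thesis using nE l by (auto simp: posv_def)
    qed
  qed
qed

lemma negv_Einv: assumes "l \<in> {1..n}" "negv n v" shows "negv n (Einv n l v)"
  using posv_Einv[OF assms(1), of "- v"] assms(2) by (simp add: negv_posv Einv_uminus)

lemma negv_Einv1:
  assumes l: "l \<in> {1..n}" and v: "negv n v"
  shows "(\<forall>i\<in>{1..n}. v i = - unitvec l i) \<or> negv n (Einv n l (v + unitvec l))"
proof -
  have "posv n (- v)" using v by (simp add: negv_posv)
  from posv_Einv1[OF l this] show ?thesis
  proof
    assume h: "\<forall>i\<in>{1..n}. (- v) i = unitvec l i"
    have "\<forall>i\<in>{1..n}. v i = - unitvec l i"
    proof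
      fix i assume "i \<in> {1..n}"
      then have "- v i = unitvec l i" using h by simp
      then show "v i = - unitvec l i" by simp
    qed
    then show ?thesis by (rule disjI1)
  next
    assume h: "posv n (Einv n l (- v - unitvec l))"
    have "- v - unitvec l = - (v + unitvec l)" by (simp add: fun_eq_iff)
    then have "posv n (- Einv n l (v + unitvec l))" using h by (simp only: Einv_uminus)
    then show ?thesis unfolding negv_posv by (rule disjI2)
  qed
qed


section \<open>Structure of B\<close>

lemma fid1: "(a + b) - c = (a - c) + (b::nat\<Rightarrow>int)" by (simp add: fun_eq_iff)
lemma fid2: "(a + b) - (c + b) = a - (c::nat\<Rightarrow>int)" by (simp add: fun_eq_iff)
lemma fid3: "a - (b + c) = (a - b) - (c::nat\<Rightarrow>int)" by (simp add: fun_eq_iff)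
lemma fid4: "x + d + e = (x + e) + (d::nat\<Rightarrow>int)" by (simp add: fun_eq_iff)
lemma fid5: "x + d - e = (x - e) + (d::nat\<Rightarrow>int)" by (simp add: fun_eq_iff)

lemma CP_snoc:
  assumes "set w \<subseteq> {1..n}" "l \<in> {1..n}"
  shows "Cw n (w @ [l]) (Pv (w @ [l])) = Einv n l (Cw n w (Pv w) + unitvec l)"
  using assms by (simp add: C_snoc Pv_snoc Cw_add C_delta Einv_add)

lemma Bset_snoc_cases:
  assumes "q \<in> Bset (w @ [l])"
  obtains "q \<in> Bset w" | x where "x \<in> Bset w" "q = x + delta w l"
  using assms unfolding Bset_snoc_iff by blast

lemma S2:
  assumes "set w \<subseteq> {1..n}" "q \<in> Bset w"
  shows "nonneg n (Cw n w q) \<and> nonneg n (Cw n w (Pv w) - Cw n w q)"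
  using assms
proof (induction w arbitrary: q rule: rev_induct)
  case Nil
  then have "q = 0" by (simp add: Bset_nil)
  then show ?case by (simp add: Cw_zero Pv_nil nonneg_zero)
next
  case (snoc l w)
  have l: "l \<in> {1..n}" and w: "set w \<subseteq> {1..n}" using snoc.prems by auto
  note hP = CP_snoc[OF w l]
  from snoc.prems(2) show ?case
  proof (cases rule: Bset_snoc_cases)
    case 1
    note IH = snoc.IH[OF w 1]
    have a: "Cw n (w @ [l]) q = Einv n l (Cw n w q)" by (simp add: C_snoc[OF l])
    have b: "Cw n (w @ [l]) (Pv (w @ [l])) - Cw n (w @ [l]) q
        = Einv n l ((Cw n w (Pv w) - Cw n w q) + unitvec l)"
      unfolding hP a Einv_diff[symmetric] fid1 ..
    show ?thesis unfolding b unfolding a using IH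
      by (intro conjI nonneg_Einv nonneg_add nonneg_unit) blast+
  next
    case (2 x)
    note IH = snoc.IH[OF w 2(1)]
    have a: "Cw n (w @ [l]) q = Einv n l (Cw n w x + unitvec l)"
      by (simp add: 2(2) C_snoc[OF l] Cw_add C_delta[OF w l] Einv_add)
    have b: "Cw n (w @ [l]) (Pv (w @ [l])) - Cw n (w @ [l]) q
        = Einv n l (Cw n w (Pv w) - Cw n w x)"
      unfolding hP a Einv_diff[symmetric] fid2 ..
    show ?thesis unfolding b unfolding a using IH
      by (intro conjI nonneg_Einv nonneg_add nonneg_unit) blast+
  qed
qed

lemma S3:
  assumes "set w \<subseteq> {1..n}" "q \<in> Bset w" "k \<in> {1..n}"
  shows "q + unitvec k \<in> Bset w \<or> posv n (Cw n w (q + unitvec k) - Cw n w (Pv w))"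
  using assms
proof (induction w arbitrary: q rule: rev_induct)
  case Nil
  then have "q = 0" by (simp add: Bset_nil)
  moreover have "Cw n [] (unitvec k) = unitvec k"
    using C_delta[of "[]" n k] Nil.prems(3) by (simp add: delta_nil)
  moreover have "posv n (unitvec k)" using Nil.prems(3) unfolding posv_def
    by (intro conjI nonneg_unit bexI[of _ k]) (simp_all add: unitvec_def)
  ultimately show ?case by (simp add: Cw_zero Pv_nil)
next
  case (snoc l w)
  have l: "l \<in> {1..n}" and w: "set w \<subseteq> {1..n}" and k: "k \<in> {1..n}" using snoc.prems by auto
  note hP = CP_snoc[OF w l]
  have BZ: "Bset w \<subseteq> Zn n" by (rule B_Zn[OF w])
  from snoc.prems(2) show ?case
  proof (cases rule: Bset_snoc_cases)
    case 1
    from snoc.IH[OF w 1 k] show ?thesis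
    proof
      assume "q + unitvec k \<in> Bset w" then show ?thesis unfolding Bset_snoc_iff by blast
    next
      let ?u = "Cw n w (q + unitvec k) - Cw n w (Pv w)"
      assume u: "posv n ?u"
      have a: "Cw n (w @ [l]) (q + unitvec k) - Cw n (w @ [l]) (Pv (w @ [l]))
          = Einv n l (?u - unitvec l)"
        unfolding hP unfolding C_snoc[OF l] Einv_diff[symmetric] fid3 ..
      from posv_Einv1[OF l u] show ?thesis
      proof
        assume e: "\<forall>i\<in>{1..n}. ?u i = unitvec l i"
        have "Cw n w (q + unitvec k) = Cw n w (Pv w + delta w l)"
        proof (rule ext)
          fix i show "Cw n w (q + unitvec k) i = Cw n w (Pv w + delta w l) i"
          proof (cases "i \<in> {1..n}")
            case True
            then have h: "(Cw n w (q + unitvec k) - Cw n w (Pv w)) i = unitvec l i" using e by blast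
            have "Cw n w (Pv w + delta w l) i = Cw n w (Pv w) i + unitvec l i"
              by (simp only: Cw_add C_delta[OF w l] plus_fun_apply)
            moreover have "Cw n w (q + unitvec k) i = Cw n w (Pv w) i + unitvec l i"
              using h by (simp only: fun_diff_def)
            ultimately show ?thesis by simp
          next
            case False then show ?thesis by (simp add: Cw_out)
          qed
        qed
        moreover have "q + unitvec k \<in> Zn n" using Zn_add[OF subsetD[OF BZ 1] Zn_unit[OF k]] .
        moreover have "Pv w + delta w l \<in> Zn n" using Pv_Zn[OF w] delta_Zn[OF w l] by (rule Zn_add)
        ultimately have "q + unitvec k = Pv w + delta w l" by (rule C_inj[OF w, rotated 2])
        then have "q + unitvec k = Pv (w @ [l])" by (simp only: Pv_snoc)
        then show ?thesis using Pv_in_B by (metis disjI1)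
      next
        assume "posv n (Einv n l (?u - unitvec l))"
        then show ?thesis unfolding a by (rule disjI2)
      qed
    qed
  next
    case (2 x)
    have qe: "q + unitvec k = (x + unitvec k) + delta w l" unfolding 2(2) by (rule fid4)
    from snoc.IH[OF w 2(1) k] show ?thesis
    proof
      assume "x + unitvec k \<in> Bset w"
      then have "(x + unitvec k) + delta w l \<in> Bset (w @ [l])" unfolding Bset_snoc_iff by blast
      then show ?thesis unfolding qe by (rule disjI1)
    next
      let ?u = "Cw n w (x + unitvec k) - Cw n w (Pv w)"
      assume u: "posv n ?u"
      have "Cw n (w @ [l]) (q + unitvec k) - Cw n (w @ [l]) (Pv (w @ [l]))
          = Einv n l ((Cw n w (x + unitvec k) + unitvec l) - (Cw n w (Pv w) + unitvec l))"
        unfolding hP unfolding qe C_snoc[OF l] Einv_diff[symmetric]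
        by (simp only: Cw_add C_delta[OF w l])
      also have "\<dots> = Einv n l ?u" by (simp only: fid2)
      finally show ?thesis using posv_Einv[OF l u] by (metis disjI2)
    qed
  qed
qed

lemma S4:
  assumes "set w \<subseteq> {1..n}" "q \<in> Bset w" "k \<in> {1..n}"
  shows "q - unitvec k \<in> Bset w \<or> negv n (Cw n w (q - unitvec k))"
  using assms
proof (induction w arbitrary: q rule: rev_induct)
  case Nil
  then have "q = 0" by (simp add: Bset_nil)
  moreover have "Cw n [] (unitvec k) = unitvec k"
    using C_delta[of "[]" n k] Nil.prems(3) by (simp add: delta_nil)
  moreover have "negv n (- unitvec k)" using Nil.prems(3) unfolding negv_def
    by (intro conjI ballI bexI[of _ k]) (simp_all add: unitvec_def)
  moreover have "Cw n [] (q - unitvec k) = Cw n [] 0 - Cw n [] (unitvec k)"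
    by (simp only: \<open>q = 0\<close> Cw_diff)
  ultimately have "negv n (Cw n [] (q - unitvec k))"
    by (simp only: Cw_zero diff_0)
  then show ?case by (rule disjI2)
next
  case (snoc l w)
  have l: "l \<in> {1..n}" and w: "set w \<subseteq> {1..n}" and k: "k \<in> {1..n}" using snoc.prems by auto
  have BZ: "Bset w \<subseteq> Zn n" by (rule B_Zn[OF w])
  from snoc.prems(2) show ?case
  proof (cases rule: Bset_snoc_cases)
    case 1
    from snoc.IH[OF w 1 k] show ?thesis
    proof
      assume "q - unitvec k \<in> Bset w" then show ?thesis unfolding Bset_snoc_iff by blast
    next
      assume v: "negv n (Cw n w (q - unitvec k))"
      show ?thesis using negv_Einv[OF l v] unfolding C_snoc[OF l] by (rule disjI2)
    qed
  next
    case (2 x)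
    from snoc.IH[OF w 2(1) k] show ?thesis
    proof
      assume "x - unitvec k \<in> Bset w"
      then have "(x - unitvec k) + delta w l \<in> Bset (w @ [l])" unfolding Bset_snoc_iff by blast
      then show ?thesis unfolding 2(2) fid5 by (rule disjI1)
    next
      let ?v = "Cw n w (x - unitvec k)"
      assume v: "negv n ?v"
      have a: "Cw n (w @ [l]) (q - unitvec k) = Einv n l (?v + unitvec l)"
        unfolding C_snoc[OF l] 2(2) fid5 by (simp only: Cw_add C_delta[OF w l])
      from negv_Einv1[OF l v] show ?thesis
      proof
        assume e: "\<forall>i\<in>{1..n}. ?v i = - unitvec l i"
        have "Cw n w (x - unitvec k + delta w l) = Cw n w 0"
        proof (rule ext)
          fix i show "Cw n w (x - unitvec k + delta w l) i = Cw n w 0 i"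
          proof (cases "i \<in> {1..n}")
            case True
            then have "Cw n w (x - unitvec k) i = - unitvec l i" using e by blast
            then show ?thesis
              by (simp only: Cw_add C_delta[OF w l] Cw_zero plus_fun_apply zero_fun_apply)
          next
            case False then show ?thesis by (simp add: Cw_out)
          qed
        qed
        moreover have "x - unitvec k + delta w l \<in> Zn n"
          using Zn_add[OF Zn_diff[OF subsetD[OF BZ 2(1)] Zn_unit[OF k]] delta_Zn[OF w l]] .
        ultimately have "x - unitvec k + delta w l = 0" by (rule C_inj[OF w, rotated 2]) (rule Zn_0)
        then have "q - unitvec k = 0" unfolding 2(2) fid5 .
        then show ?thesis using zero_in_B by (metis disjI1)
      next
        assume "negv n (Einv n l (?v + unitvec l))"
        then show ?thesis unfolding a by (rule disjI2)
      qed
    qed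
  qed
qed


section \<open>Adjacency and connectivity\<close>

lemma adj_unit:
  assumes k: "k \<in> {1..n}"
  shows "adj n x (x + unitvec k)"
proof -
  have "(\<Sum>i=1..n. (real_of_int (x i - (x + unitvec k) i))\<^sup>2) = (\<Sum>i=1..n. if i = k then 1 else 0)"
    by (rule sum.cong) (auto simp: unitvec_def)
  also have "\<dots> = 1" using k by simp
  finally show ?thesis by (simp add: adj_def)
qed

lemma adj_sym: "adj n x y \<Longrightarrow> adj n y x"
proof -
  assume h: "adj n x y"
  have "(\<Sum>i=1..n. (real_of_int (x i - y i))\<^sup>2) = (\<Sum>i=1..n. (real_of_int (y i - x i))\<^sup>2)"
    by (rule sum.cong) (simp_all add: power2_commute)
  then show ?thesis using h by (simp add: adj_def)
qed

lemma adj_shift: "adj n (x + c) (y + c) = adj n x y"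
  by (simp add: adj_def)

lemma int_sq_1: "(d::int)\<^sup>2 = 1 \<Longrightarrow> d = 1 \<or> d = -1"
  by (simp add: power2_eq_1_iff)

lemma adj_cases:
  assumes xz: "x \<in> Zn n" and yz: "y \<in> Zn n" and a: "adj n x y"
  shows "\<exists>k\<in>{1..n}. y = x + unitvec k \<or> x = y + unitvec k"
proof -
  define d where "d i = x i - y i" for i
  define S where "S = (\<Sum>i=1..n. (d i)\<^sup>2)"
  have "real_of_int S = (\<Sum>i=1..n. (real_of_int (x i - y i))\<^sup>2)"
    by (simp add: S_def d_def)
  with a have "sqrt (real_of_int S) = 1" by (simp add: adj_def)
  then have S1: "S = 1" by simp
  have nn: "\<forall>i\<in>{1..n}. 0 \<le> (d i)\<^sup>2" by simp
  have "\<exists>k\<in>{1..n}. d k \<noteq> 0"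
  proof (rule ccontr)
    assume "\<not> ?thesis"
    then have "S = 0" by (simp add: S_def)
    with S1 show False by simp
  qed
  then obtain k where k: "k \<in> {1..n}" "d k \<noteq> 0" by blast
  have dec: "S = (d k)\<^sup>2 + (\<Sum>i\<in>{1..n} - {k}. (d i)\<^sup>2)"
    using k(1) by (simp add: S_def sum.remove)
  have r0: "0 \<le> (\<Sum>i\<in>{1..n} - {k}. (d i)\<^sup>2)" by (rule sum_nonneg) simp
  have "0 < (d k)\<^sup>2" using k(2) by simp
  then have "1 \<le> (d k)\<^sup>2" by (simp add: int_one_le_iff_zero_less)
  then have dk: "(d k)\<^sup>2 = 1" and rest: "(\<Sum>i\<in>{1..n} - {k}. (d i)\<^sup>2) = 0"
    using dec S1 r0 by linarith+
  have zero: "d i = 0" if "i \<in> {1..n}" "i \<noteq> k" for i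
  proof -
    have "\<forall>i\<in>{1..n} - {k}. (d i)\<^sup>2 = 0"
      using rest by (subst (asm) sum_nonneg_eq_0_iff) auto
    then show ?thesis using that by simp
  qed
  from int_sq_1[OF dk] show ?thesis
  proof
    assume dk1: "d k = 1"
    have "x = y + unitvec k"
    proof (rule ext)
      fix i show "x i = (y + unitvec k) i"
      proof (cases "i \<in> {1..n}")
        case True
        then show ?thesis using zero[of i] dk1 by (cases "i = k") (auto simp: d_def unitvec_def)
      next
        case False
        then have "i \<noteq> k" using k by auto
        then show ?thesis using False xz yz by (simp add: Zn_def unitvec_def)
      qed
    qed
    then show ?thesis using k by blast
  next
    assume dk1: "d k = -1"
    have "y = x + unitvec k"
    proof (rule ext)
      fix i show "y i = (x + unitvec k) i"
      proof (cases "i \<in> {1..n}")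
        case True
        then show ?thesis using zero[of i] dk1 by (cases "i = k") (auto simp: d_def unitvec_def)
      next
        case False
        then have "i \<noteq> k" using k by auto
        then show ?thesis using False xz yz by (simp add: Zn_def unitvec_def)
      qed
    qed
    then show ?thesis using k by blast
  qed
qed

definition conn :: "nat \<Rightarrow> (nat \<Rightarrow> int) set \<Rightarrow> (nat \<Rightarrow> int) \<Rightarrow> (nat \<Rightarrow> int) \<Rightarrow> bool" where
  "conn n X = (\<lambda>u v. u \<in> X \<and> v \<in> X \<and> adj n u v)\<^sup>*\<^sup>*"

lemma conn_refl: "conn n X u u" by (simp add: conn_def)

lemma conn_step: "u \<in> X \<Longrightarrow> v \<in> X \<Longrightarrow> adj n u v \<Longrightarrow> conn n X u v"
  unfolding conn_def by (rule r_into_rtranclp) simp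

lemma conn_trans: "conn n X u v \<Longrightarrow> conn n X v z \<Longrightarrow> conn n X u z"
  unfolding conn_def by (rule rtranclp_trans)

lemma conn_sym: "conn n X u v \<Longrightarrow> conn n X v u"
  unfolding conn_def
proof (induction rule: rtranclp_induct)
  case base then show ?case by simp
next
  case (step y z)
  then show ?case by (intro converse_rtranclp_into_rtranclp[of _ z y]) (auto intro: adj_sym)
qed

lemma conn_mono: "X \<subseteq> Y \<Longrightarrow> conn n X u v \<Longrightarrow> conn n Y u v"
  unfolding conn_def
proof -
  assume XY: "X \<subseteq> Y" and h: "(\<lambda>u v. u \<in> X \<and> v \<in> X \<and> adj n u v)\<^sup>*\<^sup>* u v"
  from h show "(\<lambda>u v. u \<in> Y \<and> v \<in> Y \<and> adj n u v)\<^sup>*\<^sup>* u v"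
  proof (induction rule: rtranclp_induct)
    case base then show ?case by simp
  next
    case (step y z)
    then show ?case using XY by (intro rtranclp.rtrancl_into_rtrancl[of _ u y z]) auto
  qed
qed

lemma conn_shift:
  assumes XY: "\<forall>x\<in>X. x + c \<in> Y" and h: "conn n X u v"
  shows "conn n Y (u + c) (v + c)"
  using h unfolding conn_def
proof (induction rule: rtranclp_induct)
  case base then show ?case by simp
next
  case (step y z)
  have r: "y \<in> X" "z \<in> X" "adj n y z" using step.hyps(2) by auto
  have yc: "y + c \<in> Y" using XY r(1) by blast
  have zc: "z + c \<in> Y" using XY r(2) by blast
  have ac: "adj n (y + c) (z + c)" using r(3) by (simp only: adj_shift)
  show ?case by (rule rtranclp.rtrancl_into_rtrancl[OF step.IH]) (use yc zc ac in blast)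
qed

lemma S5:
  assumes "set w \<subseteq> {1..n}" "q \<in> Bset w"
  shows "conn n (Bset w) 0 q"
  using assms
proof (induction w arbitrary: q rule: rev_induct)
  case Nil
  then have "q = 0" by (simp add: Bset_nil)
  then show ?case by (simp add: conn_refl)
next
  case (snoc l w)
  have l: "l \<in> {1..n}" and w: "set w \<subseteq> {1..n}" using snoc.prems by auto
  have sub: "Bset w \<subseteq> Bset (w @ [l])" using Bset_snoc_iff by blast
  have sh: "\<forall>x\<in>Bset w. x + delta w l \<in> Bset (w @ [l])" using Bset_snoc_iff by blast
  from snoc.prems(2) show ?case
  proof (cases rule: Bset_snoc_cases)
    case 1
    show ?thesis using conn_mono[OF sub snoc.IH[OF w 1]] .
  next
    case (2 x)
    let ?a = "avec w l"
    let ?B' = "Bset (w @ [l])"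
    have am: "?a - unitvec l \<in> Bset w" by (rule a_minus_e_in_B)
    have c1: "conn n ?B' 0 (?a - unitvec l)" using conn_mono[OF sub snoc.IH[OF w am]] .
    have aB: "?a \<in> ?B'" using sh Pv_in_B[of w] unfolding avec_Pv[of w l] by blast
    have "adj n (?a - unitvec l) (?a - unitvec l + unitvec l)" by (rule adj_unit[OF l])
    then have "adj n (?a - unitvec l) ?a" by simp
    then have c2: "conn n ?B' (?a - unitvec l) ?a" using subsetD[OF sub am] aB by (rule conn_step[rotated 2])
    have "conn n ?B' (0 + delta w l) (Pv w + delta w l)"
      by (rule conn_shift[OF sh snoc.IH[OF w Pv_in_B]])
    then have c3: "conn n ?B' ?a (0 + delta w l)" unfolding avec_Pv[of w l] by (rule conn_sym)
    have c4: "conn n ?B' (0 + delta w l) (x + delta w l)"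
      by (rule conn_shift[OF sh snoc.IH[OF w 2(1)]])
    show ?thesis unfolding 2(2)
      using conn_trans[OF conn_trans[OF conn_trans[OF c1 c2] c3] c4] .
  qed
qed


section \<open>Lexicographic order and permutation action\<close>

lemma act_add: "act \<sigma> (x + y) = act \<sigma> x + act \<sigma> y" by (simp add: act_def fun_eq_iff)
lemma act_diff: "act \<sigma> (x - y) = act \<sigma> x - act \<sigma> y" by (simp add: act_def fun_eq_iff)
lemma act_zero: "act \<sigma> 0 = 0" by (simp add: act_def fun_eq_iff)

lemma act_unit:
  assumes \<sigma>: "\<sigma> permutes {1..n}" and sj: "\<sigma> j = n"
  shows "act \<sigma> (unitvec j) = unitvec n"
proof (rule ext)
  fix i
  have "inv \<sigma> i = j \<longleftrightarrow> i = n"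
  proof
    assume "inv \<sigma> i = j"
    then have "\<sigma> (inv \<sigma> i) = \<sigma> j" by simp
    then show "i = n" using permutes_inverses(1)[OF \<sigma>] sj by simp
  next
    assume "i = n"
    then show "inv \<sigma> i = j" using permutes_inverses(2)[OF \<sigma>, of j] sj by simp
  qed
  then show "act \<sigma> (unitvec j) i = unitvec n i" by (simp add: act_def unitvec_def)
qed

lemma act_nonneg:
  assumes \<sigma>: "\<sigma> permutes {1..n}" and y: "nonneg n y"
  shows "nonneg n (act \<sigma> y)"
  unfolding nonneg_def
proof
  fix i assume "i \<in> {1..n}"
  then have "inv \<sigma> i \<in> {1..n}" using permutes_in_image[OF permutes_inv[OF \<sigma>]] by simp
  then show "0 \<le> act \<sigma> y i" using y by (simp add: act_def nonneg_def)
qed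

lemma act_posv:
  assumes \<sigma>: "\<sigma> permutes {1..n}" and y: "posv n y"
  shows "posv n (act \<sigma> y)"
proof -
  from y obtain i where i: "i \<in> {1..n}" "0 < y i" by (auto simp: posv_def)
  have "\<sigma> i \<in> {1..n}" using permutes_in_image[OF \<sigma>] i(1) by simp
  moreover have "act \<sigma> y (\<sigma> i) = y i" by (simp add: act_def permutes_inverses(2)[OF \<sigma>])
  ultimately show ?thesis using act_nonneg[OF \<sigma>] y i(2) unfolding posv_def by metis
qed

lemma act_negv:
  assumes \<sigma>: "\<sigma> permutes {1..n}" and y: "negv n y"
  shows "negv n (act \<sigma> y)"
proof -
  have "posv n (- y)" using y by (simp add: negv_posv)
  then have "posv n (act \<sigma> (- y))" by (rule act_posv[OF \<sigma>])
  moreover have "act \<sigma> (- y) = - act \<sigma> y" by (simp add: act_def fun_eq_iff)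
  ultimately show ?thesis by (simp add: negv_posv)
qed

lemma L_A: "nonneg n y \<Longrightarrow> \<not> lex_less n y 0"
  unfolding lex_less_def nonneg_def by (auto simp: not_less)

lemma L_B:
  assumes le: "\<forall>i\<in>{1..n}. y i \<le> z i" and n1: "1 \<le> n"
  shows "lex_less n y (z + unitvec n)"
proof (cases "\<forall>i\<in>{1..<n}. y i = z i")
  case True
  have "\<forall>i\<in>{1..<n}. y i = (z + unitvec n) i" using True by (simp add: unitvec_def)
  moreover have "y n < (z + unitvec n) n" using le n1 by (simp add: unitvec_def)
  ultimately show ?thesis using n1 unfolding lex_less_def by (intro bexI[of _ n]) auto
next
  case False
  let ?P = "\<lambda>i. i \<in> {1..<n} \<and> y i \<noteq> z i"
  from False have "\<exists>i. ?P i" by blast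
  then obtain k where k: "?P k" and min: "\<And>m. m < k \<Longrightarrow> \<not> ?P m"
    using exists_least_iff[of ?P] by blast
  have "y k < z k" using k le by force
  then have "y k < (z + unitvec n) k" using k by (simp add: unitvec_def)
  moreover have "\<forall>i\<in>{1..<k}. y i = (z + unitvec n) i"
  proof
    fix i assume i: "i \<in> {1..<k}"
    then have "i \<in> {1..<n}" using k by auto
    with min[of i] i have "y i = z i" by auto
    then show "y i = (z + unitvec n) i" using \<open>i \<in> {1..<n}\<close> by (simp add: unitvec_def)
  qed
  moreover have "k \<in> {1..n}" using k by auto
  ultimately show ?thesis unfolding lex_less_def by blast
qed

lemma L_C:
  assumes p: "posv n w"
  shows "\<not> lex_less n w (unitvec n)"
proof
  assume "lex_less n w (unitvec n)"
  then obtain k where k: "k \<in> {1..n}" and eq: "\<forall>i\<in>{1..<k}. w i = unitvec n i" and lt: "w k < unitvec n k"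
    unfolding lex_less_def by blast
  have nn: "\<forall>i\<in>{1..n}. 0 \<le> w i" using p by (simp add: posv_def nonneg_def)
  show False
  proof (cases "k = n")
    case False
    then have "w k < 0" using lt by (simp add: unitvec_def)
    then show False using nn k by force
  next
    case True
    have "\<forall>i\<in>{1..n}. w i = 0"
    proof
      fix i assume i: "i \<in> {1..n}"
      show "w i = 0"
      proof (cases "i = n")
        case True
        have "0 \<le> w i" using nn i by blast
        moreover have "w i < 1" using lt True \<open>k = n\<close> by (simp add: unitvec_def)
        ultimately show ?thesis by linarith
      next
        case False
        then have "i \<in> {1..<k}" using i \<open>k = n\<close> by auto
        then show ?thesis using eq False by (simp add: unitvec_def)
      qed
    qed
    then show False using p by (auto simp: posv_def)
  qed
qed

lemma L_D:
  assumes ng: "negv n w"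
  shows "lex_less n w 0"
proof -
  let ?P = "\<lambda>i. i \<in> {1..n} \<and> w i \<noteq> 0"
  from ng have "\<exists>i. ?P i" by (auto simp: negv_def)
  then obtain k where k: "?P k" and min: "\<And>m. m < k \<Longrightarrow> \<not> ?P m"
    using exists_least_iff[of ?P] by blast
  have "w k < 0" using k ng by (force simp: negv_def)
  moreover have "\<forall>i\<in>{1..<k}. w i = 0 i"
  proof
    fix i assume i: "i \<in> {1..<k}"
    then have "i \<in> {1..n}" using k by auto
    with min[of i] i show "w i = 0 i" by auto
  qed
  ultimately show ?thesis using k unfolding lex_less_def by auto
qed

lemma L_shift2: "lex_less n x (c + e) \<Longrightarrow> lex_less n (x - c) e"
  unfolding lex_less_def by force

lemma L_le:
  assumes n1: "1 \<le> n"
  shows "lex_le n y z \<longleftrightarrow> lex_less n y (z + unitvec n)"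
proof
  assume "lex_le n y z"
  then consider "lex_less n y z" | "\<forall>i\<in>{1..n}. y i = z i" unfolding lex_le_def by blast
  then show "lex_less n y (z + unitvec n)"
  proof cases
    case 1
    then obtain k where k: "k \<in> {1..n}" "\<forall>i\<in>{1..<k}. y i = z i" "y k < z k"
      unfolding lex_less_def by blast
    have "\<forall>i\<in>{1..<k}. y i = (z + unitvec n) i" using k by (auto simp: unitvec_def)
    moreover have "y k < (z + unitvec n) k" using k by (cases "k = n") (simp_all add: unitvec_def)
    ultimately show ?thesis using k(1) unfolding lex_less_def by blast
  next
    case 2
    then show ?thesis using L_B[of n y z] n1 by simp
  qed
next
  assume "lex_less n y (z + unitvec n)"
  then obtain k where k: "k \<in> {1..n}" "\<forall>i\<in>{1..<k}. y i = (z + unitvec n) i" "y k < (z + unitvec n) k"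
    unfolding lex_less_def by blast
  have eqk: "\<forall>i\<in>{1..<k}. y i = z i" using k by (auto simp: unitvec_def)
  show "lex_le n y z"
  proof (cases "k = n")
    case False
    then have "y k < z k" using k by (simp add: unitvec_def)
    then show ?thesis using k(1) eqk unfolding lex_le_def lex_less_def by blast
  next
    case True
    then have "y n \<le> z n" using k by (simp add: unitvec_def)
    then show ?thesis
    proof (cases "y n < z n")
      case True
      then show ?thesis using k(1) eqk \<open>k = n\<close> unfolding lex_le_def lex_less_def by blast
    next
      case False
      then have "y n = z n" using \<open>y n \<le> z n\<close> by simp
      then have "\<forall>i\<in>{1..n}. y i = z i" using eqk \<open>k = n\<close>
        by (metis atLeastAtMost_iff atLeastLessThan_iff le_neq_implies_less)
      then show ?thesis unfolding lex_le_def by blast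
    qed
  qed
qed

lemma lex_split:
  assumes n1: "1 \<le> n"
  shows "lex_less n y z \<longleftrightarrow> (\<exists>k\<in>{1..<n}. (\<forall>i\<in>{1..<k}. y i = z i) \<and> y k < z k)
     \<or> ((\<forall>i\<in>{1..<n}. y i = z i) \<and> y n < z n)"
proof
  assume "lex_less n y z"
  then obtain k where k: "k \<in> {1..n}" "\<forall>i\<in>{1..<k}. y i = z i" "y k < z k"
    unfolding lex_less_def by blast
  show "(\<exists>k\<in>{1..<n}. (\<forall>i\<in>{1..<k}. y i = z i) \<and> y k < z k) \<or> ((\<forall>i\<in>{1..<n}. y i = z i) \<and> y n < z n)"
  proof (cases "k = n")
    case True then show ?thesis using k by blast
  next
    case False then have "k \<in> {1..<n}" using k by auto
    then show ?thesis using k by blast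
  qed
next
  assume "(\<exists>k\<in>{1..<n}. (\<forall>i\<in>{1..<k}. y i = z i) \<and> y k < z k) \<or> ((\<forall>i\<in>{1..<n}. y i = z i) \<and> y n < z n)"
  then show "lex_less n y z"
  proof
    assume "\<exists>k\<in>{1..<n}. (\<forall>i\<in>{1..<k}. y i = z i) \<and> y k < z k"
    then obtain k where "k \<in> {1..<n}" "\<forall>i\<in>{1..<k}. y i = z i" "y k < z k" by blast
    then show ?thesis unfolding lex_less_def by (intro bexI[of _ k]) auto
  next
    assume "(\<forall>i\<in>{1..<n}. y i = z i) \<and> y n < z n"
    then show ?thesis using n1 unfolding lex_less_def by (intro bexI[of _ n]) auto
  qed
qed

lemma L_cong:
  assumes n1: "1 \<le> n"
    and ag: "\<forall>i\<in>{1..<n}. y' i = y i \<and> z' i = z i"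
    and last: "(\<forall>i\<in>{1..<n}. y i = z i) \<Longrightarrow> y' n - z' n = y n - z n"
  shows "lex_less n y' z' \<longleftrightarrow> lex_less n y z"
proof -
  have A: "(\<exists>k\<in>{1..<n}. (\<forall>i\<in>{1..<k}. y' i = z' i) \<and> y' k < z' k)
        \<longleftrightarrow> (\<exists>k\<in>{1..<n}. (\<forall>i\<in>{1..<k}. y i = z i) \<and> y k < z k)"
  proof -
    have "(\<forall>i\<in>{1..<k}. y' i = z' i) \<longleftrightarrow> (\<forall>i\<in>{1..<k}. y i = z i)" if "k \<in> {1..<n}" for k
      using ag that by auto
    moreover have "y' k < z' k \<longleftrightarrow> y k < z k" if "k \<in> {1..<n}" for k
      using ag that by auto
    ultimately show ?thesis by blast
  qed
  have B: "((\<forall>i\<in>{1..<n}. y' i = z' i) \<and> y' n < z' n) \<longleftrightarrow> ((\<forall>i\<in>{1..<n}. y i = z i) \<and> y n < z n)"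
  proof -
    have e: "(\<forall>i\<in>{1..<n}. y' i = z' i) \<longleftrightarrow> (\<forall>i\<in>{1..<n}. y i = z i)" using ag by auto
    show ?thesis
    proof (cases "\<forall>i\<in>{1..<n}. y i = z i")
      case True then show ?thesis using e last by auto
    next
      case False then show ?thesis using e by blast
    qed
  qed
  show ?thesis unfolding lex_split[OF n1] using A B by blast
qed


lemma Comp0_conn: "Comp0 n X = {y. 0 \<in> X \<and> y \<in> X \<and> conn n X 0 y}"
  by (simp add: Comp0_def conn_def zvec_0)

lemma P1:
  assumes w: "set w \<subseteq> {1..n}" and j: "j \<in> {1..n}" and \<sigma>: "\<sigma> permutes {1..n}" and sj: "\<sigma> j = n"
  shows "Bset w = Comp0 n (Lopen n (avec w j) (Mmat n w) \<sigma> - Lopen n zvec (Mmat n w) \<sigma>)"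
proof -
  let ?X = "Lopen n (avec w j) (Mmat n w) \<sigma> - Lopen n zvec (Mmat n w) \<sigma>"
  let ?C = "Cw n w"
  let ?sP = "act \<sigma> (?C (Pv w))"
  have n1: "1 \<le> n" using j by auto
  have aj: "act \<sigma> (?C (avec w j)) = ?sP + unitvec n"
    unfolding avec_Pv[of w j] Cw_add C_delta[OF w j] act_add act_unit[OF \<sigma> sj] ..
  have z0: "act \<sigma> (mv n (Mmat n w) zvec) = 0"
    unfolding mv_Mmat[OF w] zvec_0 Cw_zero act_zero ..
  have memX: "x \<in> ?X \<longleftrightarrow> x \<in> Zn n \<and> lex_less n (act \<sigma> (?C x)) (?sP + unitvec n)
      \<and> \<not> lex_less n (act \<sigma> (?C x)) 0" for x
    unfolding Lopen_def Diff_iff mem_Collect_eq z0 unfolding mv_Mmat[OF w] aj by blast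
  have BX: "q \<in> ?X" if q: "q \<in> Bset w" for q
  proof -
    have qZ: "q \<in> Zn n" using B_Zn[OF w] q by blast
    have s2: "nonneg n (?C q)" "nonneg n (?C (Pv w) - ?C q)" using S2[OF w q] by auto
    have "nonneg n (act \<sigma> (?C (Pv w) - ?C q))" by (rule act_nonneg[OF \<sigma> s2(2)])
    then have "\<forall>i\<in>{1..n}. act \<sigma> (?C q) i \<le> ?sP i" unfolding act_diff nonneg_def by simp
    then have l1: "lex_less n (act \<sigma> (?C q)) (?sP + unitvec n)" using n1 by (rule L_B)
    have l2: "\<not> lex_less n (act \<sigma> (?C q)) 0" by (rule L_A[OF act_nonneg[OF \<sigma> s2(1)]])
    show ?thesis using memX qZ l1 l2 by blast
  qed
  have X0: "0 \<in> ?X" by (rule BX[OF zero_in_B])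
  have sub: "Bset w \<subseteq> ?X" using BX by blast
  show ?thesis
  proof
    show "Bset w \<subseteq> Comp0 n ?X"
    proof
      fix q assume q: "q \<in> Bset w"
      have "conn n ?X 0 q" by (rule conn_mono[OF sub S5[OF w q]])
      then show "q \<in> Comp0 n ?X" unfolding Comp0_conn using X0 BX[OF q] by blast
    qed
  next
    show "Comp0 n ?X \<subseteq> Bset w"
    proof
      fix y assume "y \<in> Comp0 n ?X"
      then have "conn n ?X 0 y" unfolding Comp0_conn by blast
      then show "y \<in> Bset w" unfolding conn_def
      proof (induction rule: rtranclp_induct)
        case base then show ?case by (rule zero_in_B)
      next
        case (step u v)
        have uB: "u \<in> Bset w" by (rule step.IH)
        have uX: "u \<in> ?X" and vX: "v \<in> ?X" and a: "adj n u v" using step.hyps(2) by auto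
        have uZ: "u \<in> Zn n" and vZ: "v \<in> Zn n" using uX vX memX by auto
        from adj_cases[OF uZ vZ a] obtain k where k: "k \<in> {1..n}"
          and c: "v = u + unitvec k \<or> u = v + unitvec k" by blast
        from c show ?case
        proof
          assume v: "v = u + unitvec k"
          from S3[OF w uB k] show ?thesis
          proof
            assume "u + unitvec k \<in> Bset w" then show ?thesis unfolding v .
          next
            assume p: "posv n (?C (u + unitvec k) - ?C (Pv w))"
            have "lex_less n (act \<sigma> (?C v)) (?sP + unitvec n)" using vX memX by blast
            then have "lex_less n (act \<sigma> (?C v) - ?sP) (unitvec n)" by (rule L_shift2)
            moreover have "posv n (act \<sigma> (?C v) - ?sP)"
              using act_posv[OF \<sigma> p] unfolding act_diff v .
            ultimately show ?thesis using L_C by blast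
          qed
        next
          assume u: "u = v + unitvec k"
          have vu: "v = u - unitvec k" unfolding u by simp
          from S4[OF w uB k] show ?thesis
          proof
            assume "u - unitvec k \<in> Bset w" then show ?thesis unfolding vu .
          next
            assume ng: "negv n (?C (u - unitvec k))"
            have "lex_less n (act \<sigma> (?C v)) 0"
              using L_D[OF act_negv[OF \<sigma> ng]] unfolding vu .
            moreover have "\<not> lex_less n (act \<sigma> (?C v)) 0" using vX memX by blast
            ultimately show ?thesis by blast
          qed
        qed
      qed
    qed
  qed
qed

lemma key:
  assumes \<sigma>: "\<sigma> permutes {1..n}" and sj: "\<sigma> j = n" and j: "j \<in> {1..n}"
  shows "lex_less n (act \<sigma> (Einv n j u)) (act \<sigma> (Einv n j v)) \<longleftrightarrow> lex_less n (act \<sigma> u) (act \<sigma> v)"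
proof (rule L_cong)
  show n1: "1 \<le> n" using j by auto
  have ne: "inv \<sigma> i \<noteq> j" if "i \<in> {1..<n}" for i
  proof
    assume "inv \<sigma> i = j"
    then have "\<sigma> (inv \<sigma> i) = \<sigma> j" by simp
    then have "i = n" using permutes_inverses(1)[OF \<sigma>] sj by simp
    then show False using that by simp
  qed
  show "\<forall>i\<in>{1..<n}. act \<sigma> (Einv n j u) i = act \<sigma> u i \<and> act \<sigma> (Einv n j v) i = act \<sigma> v i"
    using ne by (simp add: act_def Einv_def)
  have invn: "inv \<sigma> n = j" using permutes_inverses(2)[OF \<sigma>, of j] sj by simp
  assume ag: "\<forall>i\<in>{1..<n}. act \<sigma> u i = act \<sigma> v i"
  have eq: "u m = v m" if m: "m \<in> {1..n}" "m \<noteq> j" for m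
  proof -
    have "\<sigma> m \<in> {1..n}" using permutes_in_image[OF \<sigma>] m(1) by simp
    moreover have "\<sigma> m \<noteq> n"
    proof
      assume "\<sigma> m = n"
      then have "inv \<sigma> (\<sigma> m) = inv \<sigma> (\<sigma> j)" using sj by simp
      then show False using permutes_inverses(2)[OF \<sigma>] m(2) by simp
    qed
    ultimately have "\<sigma> m \<in> {1..<n}" by auto
    then have "act \<sigma> u (\<sigma> m) = act \<sigma> v (\<sigma> m)" using ag by blast
    then show ?thesis by (simp add: act_def permutes_inverses(2)[OF \<sigma>])
  qed
  have "(\<Sum>m=1..n. u m) - (\<Sum>m=1..n. v m) = (\<Sum>m=1..n. u m - v m)" by (simp add: sum_subtractf)
  also have "\<dots> = (u j - v j) + (\<Sum>m\<in>{1..n} - {j}. u m - v m)" using j by (simp add: sum.remove)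
  also have "(\<Sum>m\<in>{1..n} - {j}. u m - v m) = 0" using eq by simp
  finally have "(\<Sum>m=1..n. u m) - (\<Sum>m=1..n. v m) = u j - v j" by simp
  then show "act \<sigma> (Einv n j u) n - act \<sigma> (Einv n j v) n = act \<sigma> u n - act \<sigma> v n"
    by (simp add: act_def Einv_def invn)
qed

lemma P2:
  assumes w: "set w \<subseteq> {1..n}" and j: "j \<in> {1..n}" and \<sigma>: "\<sigma> permutes {1..n}" and sj: "\<sigma> j = n"
  shows "Bset (w @ [j]) = Comp0 n (Lset n (avec w j) (Mmat n w) \<sigma> - Lopen n zvec (Mmat n w) \<sigma>)"
proof -
  have w': "set (w @ [j]) \<subseteq> {1..n}" using w j by auto
  have n1: "1 \<le> n" using j by auto
  let ?C = "Cw n w" and ?C' = "Cw n (w @ [j])"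
  have e1: "lex_le n (act \<sigma> (?C x)) (act \<sigma> (?C (avec w j)))
      \<longleftrightarrow> lex_less n (act \<sigma> (?C' x)) (act \<sigma> (?C' (avec (w @ [j]) j)))" for x
  proof -
    have h1: "act \<sigma> (?C (avec w j)) + unitvec n = act \<sigma> (?C (avec w j) + unitvec j)"
      unfolding act_add act_unit[OF \<sigma> sj] ..
    have A: "?C' (avec (w @ [j]) j) = Einv n j (?C (avec w j) + unitvec j)"
      unfolding C_snoc[OF j] by (simp add: avec_snoc Cw_add C_delta[OF w j])
    have B: "?C' x = Einv n j (?C x)" by (rule C_snoc[OF j])
    have "lex_le n (act \<sigma> (?C x)) (act \<sigma> (?C (avec w j)))
        \<longleftrightarrow> lex_less n (act \<sigma> (?C x)) (act \<sigma> (?C (avec w j) + unitvec j))"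
      unfolding L_le[OF n1] h1 ..
    also have "\<dots> \<longleftrightarrow> lex_less n (act \<sigma> (Einv n j (?C x))) (act \<sigma> (Einv n j (?C (avec w j) + unitvec j)))"
      by (rule key[OF \<sigma> sj j, symmetric])
    also have "\<dots> \<longleftrightarrow> lex_less n (act \<sigma> (?C' x)) (act \<sigma> (?C' (avec (w @ [j]) j)))"
      unfolding A B ..
    finally show ?thesis .
  qed
  have e2: "lex_less n (act \<sigma> (?C x)) (act \<sigma> (?C zvec))
      \<longleftrightarrow> lex_less n (act \<sigma> (?C' x)) (act \<sigma> (?C' zvec))" for x
    unfolding C_snoc[OF j] key[OF \<sigma> sj j] ..
  have "Lset n (avec w j) (Mmat n w) \<sigma> - Lopen n zvec (Mmat n w) \<sigma>
      = Lopen n (avec (w @ [j]) j) (Mmat n (w @ [j])) \<sigma> - Lopen n zvec (Mmat n (w @ [j])) \<sigma>"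
    unfolding Lset_def Lopen_def mv_Mmat[OF w] mv_Mmat[OF w'] using e1 e2 by blast
  then show ?thesis using P1[OF w' j \<sigma> sj] by simp
qed

theorem lemma3p7:
  fixes n j :: nat and w :: "nat list" and \<sigma> :: "nat \<Rightarrow> nat"
  assumes "set w \<subseteq> {1..n}"
    and "j \<in> {1..n}"
    and "\<sigma> permutes {1..n}"
    and "\<sigma> j = n"
  shows "Bset w = Comp0 n (Lopen n (avec w j) (Mmat n w) \<sigma> - Lopen n zvec (Mmat n w) \<sigma>)
    \<and> Bset (w @ [j]) = Comp0 n (Lset n (avec w j) (Mmat n w) \<sigma> - Lopen n zvec (Mmat n w) \<sigma>)"
  using P1[OF assms] P2[OF assms] by blast

end
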